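(* Let $\mathbf b=b_0b_1b_2\cdots$ be any infinite sequence over $\{1,-1\}$ and let $\mathbf f=f_1f_2f_3\cdots$ be the paper-folding word defined by $\mathbf b$. Then for every positive integer $m$ the word $\mathbf f$ contains an abelian $m$-power.
   Context: The paper-folding word $\mathbf f=f_1f_2f_3\cdots$ over $\{1,-1\}$ defined by a sequence of instructions $\mathbf b=b_0b_1b_2\cdots\in\{1,-1\}^{\mathbb N}$ is given by $f_i=(-1)^j b_k$, where $i=2^k(2j+1)$ with $k,j\ge 0$. A word $w$ is an abelian $m$-power if $w=w_1w_2\cdots w_m$ where for all $i,j\in\{1,\dots,m\}$ the word $w_j$ is obtained from $w_i$ by a permutation of its letters (i.e. $|w_i|_a=|w_j|_a$ for each letter $a$, where $|u|_a$ is the number of occurrences of $a$ in $u$). The word $\mathbf f$ contains an abelian $m$-power if some nonempty factor $f_if_{i+1}\cdots f_j$ with $0<i\le j$ is an abelian $m$-power. *)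

theory Defs
  imports Main
begin

text \<open>Paper-folding word defined by instructions b: for i = 2^k (2j+1), f_i = (-1)^j b_k.
  Index 0 is unused (the word is f_1 f_2 f_3 ...).\<close>
definition paperfold :: "(nat \<Rightarrow> int) \<Rightarrow> nat \<Rightarrow> int" where
  "paperfold b i = (THE v. \<exists>k j. i = 2^k * (2*j+1) \<and> v = (-1)^j * b k)"

definition abelian_power :: "nat \<Rightarrow> 'a list \<Rightarrow> bool" where
  "abelian_power m w = (\<exists>ws. length ws = m \<and> concat ws = w \<and>
      (\<forall>u\<in>set ws. \<forall>v\<in>set ws. \<forall>a. count_list u a = count_list v a))"

end

theory Submission
  imports Defs "HOL-Library.Infinite_Set"
begin

lemma pow_odd_uniq:
  fixes k j k' j' :: nat
  shows "2^k*(2*j+1) = 2^k'*(2*j'+1) \<Longrightarrow> k = k' \<and> j = j'"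
proof (induction k arbitrary: k')
  case 0
  then show ?case
    by (cases k') (auto, presburger)
next
  case (Suc k)
  show ?case
  proof (cases k')
    case 0
    with Suc.prems show ?thesis by (auto, presburger)
  next
    case (Suc k'')
    with Suc.prems have "2^k*(2*j+1) = 2^k''*(2*j'+1)" by simp
    with Suc.IH[of k''] \<open>k' = Suc k''\<close> show ?thesis by simp
  qed
qed

lemma pf_eq: "paperfold b (2^k*(2*j+1)) = (-1)^j * b k"
  unfolding paperfold_def
proof (rule the_equality)
  show "\<exists>k' j'. 2 ^ k * (2 * j + 1) = 2 ^ k' * (2 * j' + 1) \<and> (-1) ^ j * b k = (-1) ^ j' * b k'"
    by blast
next
  fix v assume "\<exists>k' j'. 2 ^ k * (2 * j + 1) = 2 ^ k' * (2 * j' + 1) \<and> v = (-1) ^ j' * b k'"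
  then obtain k' j' where "2 ^ k * (2 * j + 1) = 2 ^ k' * (2 * j' + 1)" "v = (-1) ^ j' * b k'" by blast
  then show "v = (-1) ^ j * b k" using pow_odd_uniq by metis
qed

lemma pf_odd: "paperfold b (2*j+1) = (-1)^j * b 0"
  using pf_eq[of b 0 j] by simp

lemma decomp: "0 < (i::nat) \<Longrightarrow> \<exists>k j. i = 2^k*(2*j+1)"
proof (induction i rule: less_induct)
  case (less i)
  show ?case
  proof (cases "even i")
    case True
    then obtain i' where i': "i = 2*i'" by blast
    with less.prems have "0 < i'" "i' < i" by auto
    with less.IH obtain k j where "i' = 2^k*(2*j+1)" by blast
    with i' have "i = 2^(Suc k)*(2*j+1)" by simp
    then show ?thesis by blast
  next
    case False
    then obtain j where "i = 2*j+1" using oddE by blast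
    then have "i = 2^0*(2*j+1)" by simp
    then show ?thesis by blast
  qed
qed

definition sh :: "nat \<Rightarrow> (nat \<Rightarrow> int) \<Rightarrow> nat \<Rightarrow> int" where
  "sh K b = (\<lambda>i. b (K + i))"

lemma sh_sh: "sh K (sh K' b) = sh (K' + K) b"
  unfolding sh_def by (simp add: add.assoc)

lemma pf_even: "0 < i \<Longrightarrow> paperfold b (2*i) = paperfold (sh 1 b) i"
proof -
  assume "0 < i"
  then obtain k j where i: "i = 2^k*(2*j+1)" using decomp by blast
  then have "2*i = 2^(Suc k)*(2*j+1)" by simp
  then show ?thesis using i pf_eq[of b "Suc k" j] pf_eq[of "sh 1 b" k j] by (simp add: sh_def)
qed

fun Sm :: "(nat \<Rightarrow> int) \<Rightarrow> nat \<Rightarrow> int" where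
  "Sm b 0 = 0"
| "Sm b (Suc n) = Sm b n + paperfold b (Suc n)"

definition od :: "nat \<Rightarrow> int" where "od q = (if odd q then 1 else 0)"

lemma Sm_double:
  "Sm b (2*n) = b 0 * od n + Sm (sh 1 b) n \<and> Sm b (2*n+1) = b 0 * (1 - od n) + Sm (sh 1 b) n"
proof (induction n)
  case 0
  then show ?case using pf_odd[of b 0] by (simp add: od_def)
next
  case (Suc n)
  have e1: "2 * Suc n = Suc (2*n+1)" by simp
  have e2: "paperfold b (2 * Suc n) = paperfold (sh 1 b) (Suc n)" by (rule pf_even) simp
  have e3: "paperfold b (2 * Suc n + 1) = (-1)^(Suc n) * b 0" by (rule pf_odd)
  have A: "Sm b (2*Suc n) = b 0 * od (Suc n) + Sm (sh 1 b) (Suc n)"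
  proof -
    have "Sm b (2*Suc n) = Sm b (2*n+1) + paperfold b (2 * Suc n)"
      by (simp only: e1 Sm.simps)
    also have "\<dots> = b 0 * (1 - od n) + Sm (sh 1 b) n + paperfold (sh 1 b) (Suc n)"
      using Suc.IH e2 by simp
    also have "\<dots> = b 0 * od (Suc n) + Sm (sh 1 b) (Suc n)"
      by (simp add: od_def)
    finally show ?thesis .
  qed
  have "Sm b (2*Suc n+1) = Sm b (2*Suc n) + paperfold b (2 * Suc n + 1)" by simp
  also have "\<dots> = b 0 * (1 - od (Suc n)) + Sm (sh 1 b) (Suc n)"
    using A e3 by (simp add: od_def)
  finally show ?case using A by simp
qed

lemma od_add_even: "even a \<Longrightarrow> od (a + r) = od r"
  unfolding od_def by auto

lemma band_aux:
  "r < 2^k \<Longrightarrow> Sm b (2^(Suc k)*q + r) = Sm b r + b k * od q + Sm (sh (Suc k) b) q"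
proof (induction k arbitrary: b r)
  case 0
  then have "r = 0" by simp
  then show ?case using Sm_double[of b q] by simp
next
  case (Suc k)
  obtain r' where r': "r = 2*r' \<or> r = 2*r'+1" by (metis oddE evenE)
  have r'b: "r' < 2^k" using Suc.prems r' by auto
  define N where "N = 2^(Suc k)*q + r'"
  have odN: "od N = od r'" unfolding N_def by (rule od_add_even) simp
  have IH: "Sm (sh 1 b) N = Sm (sh 1 b) r' + (sh 1 b) k * od q + Sm (sh (Suc k) (sh 1 b)) q"
    unfolding N_def using Suc.IH[OF r'b] .
  have sb: "(sh 1 b) k = b (Suc k)" "sh (Suc k) (sh 1 b) = sh (Suc (Suc k)) b"
    by (simp_all add: sh_def sh_sh)
  from r' show ?case
  proof
    assume r: "r = 2*r'"
    have e: "2^(Suc (Suc k))*q + r = 2*N" unfolding N_def r by simp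
    have "Sm b (2*N) = b 0 * od N + Sm (sh 1 b) N" using Sm_double[of b N] by blast
    then have "Sm b (2^(Suc (Suc k))*q + r) = b 0 * od N + Sm (sh 1 b) N" using e by simp
    moreover have "Sm b r = b 0 * od r' + Sm (sh 1 b) r'" using Sm_double r by simp
    ultimately show ?thesis using IH sb odN by simp
  next
    assume r: "r = 2*r'+1"
    have e: "2^(Suc (Suc k))*q + r = 2*N+1" unfolding N_def r by simp
    have "Sm b (2*N+1) = b 0 * (1 - od N) + Sm (sh 1 b) N" using Sm_double[of b N] by blast
    then have "Sm b (2^(Suc (Suc k))*q + r) = b 0 * (1 - od N) + Sm (sh 1 b) N" using e by simp
    moreover have "Sm b (2*r'+1) = b 0 * (1 - od r') + Sm (sh 1 b) r'" using Sm_double[of b r'] by blast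
    then have "Sm b r = b 0 * (1 - od r') + Sm (sh 1 b) r'" using r by simp
    ultimately show ?thesis using IH sb odN by simp
  qed
qed

lemma band:
  assumes "1 \<le> K" "r < 2^(K-1)"
  shows "Sm b (2^K*q + r) = Sm b r + b (K-1) * od q + Sm (sh K b) q"
proof -
  obtain k where K: "K = Suc k" using assms(1) by (cases K) auto
  show ?thesis using band_aux[of r k b q] assms(2) K by simp
qed

lemma pf_dep:
  assumes "0 < i" "\<And>k. 2^k \<le> i \<Longrightarrow> b k = c k"
  shows "paperfold b i = paperfold c i"
proof -
  obtain k j where i: "i = 2^k*(2*j+1)" using decomp assms(1) by blast
  have "2^k \<le> i" unfolding i by simp
  then have "b k = c k" using assms(2) by blast
  then show ?thesis unfolding i pf_eq by simp
qed

lemma Sm_dep: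
  "(\<And>k. 2^k \<le> n \<Longrightarrow> b k = c k) \<Longrightarrow> Sm b n = Sm c n"
proof (induction n)
  case 0
  then show ?case by simp
next
  case (Suc n)
  have "Sm b n = Sm c n" using Suc.IH Suc.prems by simp
  moreover have "paperfold b (Suc n) = paperfold c (Suc n)"
    by (rule pf_dep) (use Suc.prems in auto)
  ultimately show ?case by simp
qed

lemma Sm_small:
  "Sm c 2 = c 0 + c 1" "Sm c 7 - Sm c 5 = - c 0 - c 1"
proof -
  have p1: "paperfold c 1 = c 0" using pf_odd[of c 0] by simp
  have p2: "paperfold c 2 = c 1" using pf_even[of 1 c] pf_odd[of "sh 1 c" 0] by (simp add: sh_def)
  have p6: "paperfold c 6 = - c 1" using pf_even[of 3 c] pf_odd[of "sh 1 c" 1] by (simp add: sh_def)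
  have p7: "paperfold c 7 = - c 0" using pf_odd[of c 3] by simp
  have "Sm c 2 = paperfold c 1 + paperfold c 2" by (simp add: numeral_2_eq_2)
  then show "Sm c 2 = c 0 + c 1" using p1 p2 by simp
  have "Sm c 7 = Sm c 5 + paperfold c 6 + paperfold c 7"
    by (simp add: numeral_eq_Suc)
  then show "Sm c 7 - Sm c 5 = - c 0 - c 1" using p6 p7 by simp
qed

lemma key_identity:
  assumes "1 \<le> \<kappa>" "t < 2^(\<kappa>-1)"
  shows "Sm c (t + 2*2^\<kappa>) - Sm c t + (Sm c (t + 7*2^\<kappa>) - Sm c (t + 5*2^\<kappa>)) = 0"
proof -
  have a: "Sm c (t + 2*2^\<kappa>) = Sm c t + c (\<kappa>-1) * od 2 + Sm (sh \<kappa> c) 2"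
    using band[OF assms, of c 2] by (simp add: algebra_simps)
  have b: "Sm c (t + 5*2^\<kappa>) = Sm c t + c (\<kappa>-1) * od 5 + Sm (sh \<kappa> c) 5"
    using band[OF assms, of c 5] by (simp add: algebra_simps)
  have d: "Sm c (t + 7*2^\<kappa>) = Sm c t + c (\<kappa>-1) * od 7 + Sm (sh \<kappa> c) 7"
    using band[OF assms, of c 7] by (simp add: algebra_simps)
  show ?thesis using a b d Sm_small[of "sh \<kappa> c"] by (simp add: od_def)
qed

lemma K_ge1:
  fixes K :: "nat \<Rightarrow> nat"
  assumes "\<And>c. K c + X + 1 \<le> K (Suc c)" "1 \<le> K 0"
  shows "1 \<le> K c"
proof (cases c)
  case 0 then show ?thesis using assms(2) by simp
next
  case (Suc c')
  from assms(1)[of c'] have "1 \<le> K (Suc c')" by linarith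
  then show ?thesis using Suc by simp
qed

lemma bands_bound:
  assumes "\<And>c. c < N \<Longrightarrow> x c < (2::nat)^X" "\<And>c. K c + X + 1 \<le> K (Suc c)" "1 \<le> K 0"
  shows "(\<Sum>c<N. 2^(K c) * x c) < (2::nat)^(K N - 1)"
  using assms(1)
proof (induction N)
  case 0
  then show ?case by simp
next
  case (Suc N)
  have IH: "(\<Sum>c<N. 2^(K c) * x c) < (2::nat)^(K N - 1)" using Suc by simp
  have xN: "x N + 1 \<le> 2^X" using Suc.prems[of N] by simp
  have "(2::nat)^(K N - 1) \<le> 2^(K N)" by simp
  with IH have "(\<Sum>c<N. 2^(K c) * x c) < 2^(K N)" by linarith
  then have "(\<Sum>c<Suc N. 2^(K c) * x c) < 2^(K N) + 2^(K N) * x N" by simp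
  also have "\<dots> = 2^(K N) * (x N + 1)" by (simp add: algebra_simps)
  also have "\<dots> \<le> 2^(K N) * 2^X" using xN by (intro mult_le_mono2) simp
  also have "\<dots> = 2^(K N + X)" by (simp add: power_add)
  also have "\<dots> \<le> 2^(K (Suc N) - 1)" using assms(2)[of N] by (intro power_increasing) auto
  finally show ?case .
qed

lemma bands_Sm:
  assumes "\<And>c. c < N \<Longrightarrow> x c < (2::nat)^X" "\<And>c. K c + X + 1 \<le> K (Suc c)" "1 \<le> K 0"
  shows "Sm b (\<Sum>c<N. 2^(K c) * x c) = (\<Sum>c<N. b (K c - 1) * od (x c) + Sm (sh (K c) b) (x c))"
  using assms(1)
proof (induction N)
  case 0
  then show ?case by simp
next
  case (Suc N)
  have r: "(\<Sum>c<N. 2^(K c) * x c) < (2::nat)^(K N - 1)"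
    by (rule bands_bound[OF _ assms(2,3)]) (use Suc.prems in simp)
  have K1: "1 \<le> K N" by (rule K_ge1[OF assms(2,3)])
  have "Sm b (\<Sum>c<Suc N. 2^(K c) * x c) = Sm b (2^(K N) * x N + (\<Sum>c<N. 2^(K c) * x c))"
    by (simp add: add.commute)
  also have "\<dots> = Sm b (\<Sum>c<N. 2^(K c) * x c) + b (K N - 1) * od (x N) + Sm (sh (K N) b) (x N)"
    by (rule band[OF K1 r])
  also have "\<dots> = (\<Sum>c<Suc N. b (K c - 1) * od (x c) + Sm (sh (K c) b) (x c))"
    using Suc by simp
  finally show ?case .
qed

lemma sum_split_nat: "(\<Sum>c<a+(d::nat). f c) = (\<Sum>c<a. f c) + (\<Sum>c<d. f (a + c))"
  by (induction d) (simp_all add: algebra_simps)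

lemma upt_app: "i \<le> j \<Longrightarrow> j \<le> k \<Longrightarrow> [i..<j] @ [j..<k] = [i..<k]"
  using upt_add_eq_append[of i j "k - j"] by simp

lemma concat_blocks:
  assumes "mono (f::nat \<Rightarrow> nat)"
  shows "concat (map (\<lambda>t. [f t..<f (Suc t)]) [0..<m]) = [f 0..<f m]"
proof (induction m)
  case 0 then show ?case by simp
next
  case (Suc m)
  have "f 0 \<le> f m" "f m \<le> f (Suc m)" using assms by (simp_all add: monoD)
  then show ?case using Suc by (simp add: upt_app)
qed

lemma sum_block:
  "a \<le> c \<Longrightarrow> sum_list (map (paperfold b) [Suc a..<Suc c]) = Sm b c - Sm b a"
proof (induction c)
  case 0 then show ?case by simp
next
  case (Suc c)
  show ?case
  proof (cases "a = Suc c")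
    case True then show ?thesis by simp
  next
    case False
    then have "a \<le> c" using Suc.prems by simp
    then show ?thesis using Suc.IH by simp
  qed
qed

lemma counts1:
  "set u \<subseteq> {1, -1::int} \<Longrightarrow> 2 * int (count_list u 1) = int (length u) + sum_list u"
  by (induction u) auto
lemma counts2:
  "set u \<subseteq> {1, -1::int} \<Longrightarrow> 2 * int (count_list u (-1)) = int (length u) - sum_list u"
  by (induction u) auto
lemma counts3:
  "set u \<subseteq> {1, -1::int} \<Longrightarrow> a \<notin> {1,-1} \<Longrightarrow> count_list u a = 0"
  by (induction u) auto

lemma pf_pm:
  assumes "\<And>n. b n = 1 \<or> b n = -1" "0 < i"
  shows "paperfold b i = 1 \<or> paperfold b i = -1"
proof -
  obtain k j where i: "i = 2^k*(2*j+1)" using decomp assms(2) by blast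
  show ?thesis unfolding i pf_eq using assms(1)[of k]
    by (cases "even j") auto
qed

theorem theorem5p4:
  fixes b :: "nat \<Rightarrow> int" and m :: nat
  assumes "\<And>n. b n = 1 \<or> b n = -1"
    and "0 < m"
  shows "\<exists>i j. 0 < i \<and> i \<le> j \<and> abelian_power m (map (paperfold b) [i..<Suc j])"
proof -
  note hb = assms(1)
  note hm = assms(2)
  define \<kappa> where "\<kappa> = m + 1"
  define h where "h = (2::nat)^\<kappa>"
  define X where "X = \<kappa> + 3"
  define G where "G = X + 1"
  define pat where "pat = (\<lambda>K. map (\<lambda>i. b (K - 1 + i)) [0..<X+1])"
  have inf: "infinite {i::nat. 1 \<le> i}" using infinite_Ici[of "1::nat"] by (simp add: atLeast_def)
  have fin: "finite ((\<lambda>i. pat (G*i)) ` {i::nat. 1 \<le> i})"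
  proof (rule finite_subset)
    show "(\<lambda>i. pat (G*i)) ` {i::nat. 1 \<le> i} \<subseteq> {xs. set xs \<subseteq> {1,-1} \<and> length xs = X+1}"
      by (auto simp: pat_def) (meson hb)+
    show "finite {xs. set xs \<subseteq> {1,-1::int} \<and> length xs = X+1}"
      by (rule finite_lists_length_eq) simp
  qed
  obtain a0 where infI: "infinite {i \<in> {i::nat. 1 \<le> i}. pat (G*i) = pat (G*a0)}"
    using pigeonhole_infinite[OF inf fin] by blast
  define I where "I = {i \<in> {i::nat. 1 \<le> i}. pat (G*i) = pat (G*a0)}"
  have infI': "infinite I" using infI I_def by simp
  define K where "K = (\<lambda>c. G * enumerate I c)"
  have eI: "enumerate I c \<in> I" for c using enumerate_in_set[OF infI'] .
  have Kstep: "K c + X + 1 \<le> K (Suc c)" for c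
  proof -
    have "enumerate I c < enumerate I (Suc c)" using enumerate_step[OF infI'] .
    then have "Suc (enumerate I c) \<le> enumerate I (Suc c)" by simp
    then have "G * Suc (enumerate I c) \<le> G * enumerate I (Suc c)" by (rule mult_le_mono2)
    then show ?thesis unfolding K_def G_def by simp
  qed
  have K0: "1 \<le> K 0" using eI[of 0] unfolding K_def I_def G_def by simp
  have Kge: "1 \<le> K c" for c by (rule K_ge1[OF Kstep K0])
  have patK: "pat (K c) = pat (K 0)" for c using eI[of c] eI[of 0] unfolding I_def K_def by simp
  have bK: "b (K c - 1 + i) = b (K 0 - 1 + i)" if "i \<le> X" for c i
  proof -
    have "pat (K c) ! i = pat (K 0) ! i" using patK[of c] by (simp only:)
    then show ?thesis using that unfolding pat_def by (simp del: upt_Suc)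
  qed
  define w where "w = (\<lambda>c::nat. if c < 2*h then c else c + 3*h)"
  define N where "N = 4*h"
  define n where "n = (\<lambda>t. \<Sum>c<N. 2^(K c) * (w c + t))"
  define \<beta> where "\<beta> = b (K 0 - 1)"
  define Q where "Q = Sm (sh (K 0) b)"
  define g where "g = (\<lambda>x. \<beta> * od x + Q x)"
  have mh: "m < 2^m" by (rule less_exp)
  have h2: "h = 2 * 2^m" unfolding h_def \<kappa>_def by simp
  have h8: "2^X = 8*h" unfolding h_def X_def by (simp add: power_add)
  have wb: "w c + t < 2^X" if "c < N" "t \<le> m" for c t
    using that mh unfolding h8 w_def N_def h2 by (auto, linarith+)
  have Sn: "Sm b (n t) = (\<Sum>c<N. g (w c + t))" if "t \<le> m" for t
  proof -
    have "Sm b (n t) = (\<Sum>c<N. b (K c - 1) * od (w c + t) + Sm (sh (K c) b) (w c + t))"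
      unfolding n_def by (rule bands_Sm[OF _ Kstep K0]) (use wb that in auto)
    also have "\<dots> = (\<Sum>c<N. g (w c + t))"
    proof (rule sum.cong[OF refl])
      fix c assume c: "c \<in> {..<N}"
      have e1: "b (K c - 1) = \<beta>" using bK[of 0 c] unfolding \<beta>_def by simp
      have e2: "Sm (sh (K c) b) (w c + t) = Q (w c + t)"
        unfolding Q_def
      proof (rule Sm_dep)
        fix k assume k: "2^k \<le> w c + t"
        have "w c + t < 2^X" using wb[of c t] c that by simp
        then have "(2::nat)^k < 2^X" using k by linarith
        then have "k < X" using power_strict_increasing_iff[of "2::nat" k X] by simp
        then have "b (K c - 1 + (k+1)) = b (K 0 - 1 + (k+1))" by (intro bK) simp
        then show "sh (K c) b k = sh (K 0) b k" using Kge[of c] Kge[of 0] unfolding sh_def by simp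
      qed
      show "b (K c - 1) * od (w c + t) + Sm (sh (K c) b) (w c + t) = g (w c + t)"
        unfolding g_def using e1 e2 by simp
    qed
    finally show ?thesis .
  qed
  have step: "(\<Sum>c<N. g (w c + Suc t)) = (\<Sum>c<N. g (w c + t))" if "t < m" for t
  proof -
    have split: "(\<Sum>c<N. g (w c + s)) = (\<Sum>c<2*h. g (c + 0 + s)) + (\<Sum>c<2*h. g (c + 5*h + s))" for s
    proof -
      have "(\<Sum>c<N. g (w c + s)) = (\<Sum>c<2*h + 2*h. g (w c + s))" unfolding N_def by simp
      also have "\<dots> = (\<Sum>c<2*h. g (w c + s)) + (\<Sum>c<2*h. g (w (2*h + c) + s))" by (rule sum_split_nat)
      also have "(\<Sum>c<2*h. g (w c + s)) = (\<Sum>c<2*h. g (c + 0 + s))" by (rule sum.cong) (auto simp: w_def)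
      also have "(\<Sum>c<2*h. g (w (2*h + c) + s)) = (\<Sum>c<2*h. g (c + 5*h + s))" by (rule sum.cong) (auto simp: w_def add.commute add.left_commute)
      finally show ?thesis .
    qed
    have tel: "(\<Sum>c<2*h. g (c + a + Suc t)) - (\<Sum>c<2*h. g (c + a + t)) = g (2*h + a + t) - g (a + t)" for a
    proof -
      have "(\<Sum>c<2*h. g (c + a + Suc t)) - (\<Sum>c<2*h. g (c + a + t)) = (\<Sum>c<2*h. g (Suc c + a + t) - g (c + a + t))"
        by (simp add: sum_subtractf)
      also have "\<dots> = g (2*h + a + t) - g (0 + a + t)"
        by (rule sum_lessThan_telescope[where f = "\<lambda>c. g (c + a + t)"])
      finally show ?thesis by simp
    qed
    have "(\<Sum>c<N. g (w c + Suc t)) - (\<Sum>c<N. g (w c + t)) = (g (2*h + 0 + t) - g (0 + t)) + (g (2*h + 5*h + t) - g (5*h + t))"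
      using split[of "Suc t"] split[of t] tel[of 0] tel[of "5*h"] by simp
    also have "\<dots> = 0"
    proof -
      have od1: "od (2*h + 0 + t) = od (0 + t)" by (simp add: od_add_even)
      have od2: "od (2*h + 5*h + t) = od (5*h + t)" using od_add_even[of "2*h" "5*h+t"] by (simp add: add.assoc)
      have "t < 2^(\<kappa> - 1)" using less_trans[OF that mh] unfolding \<kappa>_def by simp
      then have "Q (t + 2*2^\<kappa>) - Q t + (Q (t + 7*2^\<kappa>) - Q (t + 5*2^\<kappa>)) = 0"
        unfolding Q_def by (intro key_identity) (simp_all add: \<kappa>_def)
      then have kid: "Q (t + 2*h) - Q t + (Q (t + 7*h) - Q (t + 5*h)) = 0" unfolding h_def .
      have e3: "2*h + 5*h + t = t + 7*h" "2*h + 0 + t = t + 2*h" "5*h + t = t + 5*h" by simp_all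
      show ?thesis unfolding g_def using od1 od2 kid e3 by (simp add: algebra_simps)
    qed
    finally show ?thesis by simp
  qed
  have const: "t \<le> m \<Longrightarrow> Sm b (n t) = Sm b (n 0)" for t
  proof (induction t)
    case 0 thus ?case by simp
  next
    case (Suc t)
    then have "Sm b (n (Suc t)) = (\<Sum>c<N. g (w c + Suc t))" using Sn by simp
    also have "\<dots> = (\<Sum>c<N. g (w c + t))" using step Suc.prems by simp
    also have "\<dots> = Sm b (n t)" using Sn Suc.prems by simp
    finally show ?case using Suc by simp
  qed
  define L where "L = (\<Sum>c<N. (2::nat)^(K c))"
  have nt: "n t = n 0 + t * L" for t
  proof -
    have "n t = (\<Sum>c<N. 2^(K c) * w c + 2^(K c) * t)" unfolding n_def by (simp only: distrib_left)
    also have "\<dots> = n 0 + (\<Sum>c<N. 2^(K c)) * t" unfolding n_def by (simp only: sum.distrib sum_distrib_right add_0_right)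
    finally show ?thesis unfolding L_def by (simp only: mult.commute)
  qed
  have Lpos: "0 < L" unfolding L_def
  proof (rule sum_pos)
    have "0 \<in> {..<N}" unfolding N_def h_def by simp
    then show "{..<N} \<noteq> {}" by blast
  qed auto
  have mono_n: "mono (\<lambda>t. Suc (n t))"
  proof (rule monoI)
    fix x y :: nat assume "x \<le> y"
    then have "x * L \<le> y * L" by (rule mult_le_mono1)
    then show "Suc (n x) \<le> Suc (n y)" using nt[of x] nt[of y] by simp
  qed
  define ws where "ws = map (\<lambda>t. map (paperfold b) [Suc (n t)..<Suc (n (Suc t))]) [0..<m]"
  have blk: "set u \<subseteq> {1,-1} \<and> length u = L \<and> sum_list u = 0" if uin: "u \<in> set ws" for u
  proof -
    obtain t where t: "t < m" "u = map (paperfold b) [Suc (n t)..<Suc (n (Suc t))]"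
      using uin unfolding ws_def by (auto simp del: upt_Suc)
    have le: "n t \<le> n (Suc t)" using nt[of t] nt[of "Suc t"] by simp
    have pm: "paperfold b i \<in> {1,-1}" if "0 < i" for i using pf_pm[of b i, OF hb that] by blast
    have "set u \<subseteq> {1,-1}" unfolding t(2)
    proof (clarsimp simp del: upt_Suc)
      fix x assume "Suc (n t) \<le> x" "paperfold b x \<noteq> 1"
      then show "paperfold b x = -1" using pm[of x] by auto
    qed
    moreover have "length u = L" using t(2) nt[of t] nt[of "Suc t"] by simp
    moreover have "sum_list u = 0" using t sum_block[OF le, of b] const[of t] const[of "Suc t"] by simp
    ultimately show ?thesis by blast
  qed
  show ?thesis
  proof (intro exI conjI)
    show "0 < Suc (n 0)" by simp
    have "0 < m * L" using Lpos hm by simp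
    then show "Suc (n 0) \<le> n m" using nt[of m] by simp
    show "abelian_power m (map (paperfold b) [Suc (n 0)..<Suc (n m)])"
      unfolding abelian_power_def
    proof (intro exI conjI ballI allI)
      show "length ws = m" by (simp add: ws_def)
      have "concat ws = map (paperfold b) (concat (map (\<lambda>t. [Suc (n t)..<Suc (n (Suc t))]) [0..<m]))"
        unfolding ws_def by (simp add: map_concat comp_def)
      also have "concat (map (\<lambda>t. [Suc (n t)..<Suc (n (Suc t))]) [0..<m]) = [Suc (n 0)..<Suc (n m)]"
        using concat_blocks[OF mono_n, of m] by simp
      finally show "concat ws = map (paperfold b) [Suc (n 0)..<Suc (n m)]" .
      fix u v a assume u: "u \<in> set ws" and v: "v \<in> set ws"
      note bu = blk[OF u] and bv = blk[OF v]
      show "count_list u a = count_list v a"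
      proof (cases "a \<in> {1,-1}")
        case True
        then consider "a = 1" | "a = -1" by blast
        then show ?thesis
        proof cases
          case 1
          have "2 * int (count_list u 1) = 2 * int (count_list v 1)"
            using counts1[of u] counts1[of v] bu bv by simp
          then show ?thesis using 1 by simp
        next
          case 2
          have "2 * int (count_list u (-1)) = 2 * int (count_list v (-1))"
            using counts2[of u] counts2[of v] bu bv by simp
          then show ?thesis using 2 by simp
        qed
      next
        case False
        then show ?thesis using counts3[of u a] counts3[of v a] bu bv by simp
      qed
    qed
  qed
qed

end
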